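(* Let $\mathbb{k}$ be a field of characteristic $0$, $\mathfrak{M}$ a monomial group, and $(\epsilon_i)_{i\in I}$ a family in $\mathbb{k}[[\mathfrak{M}]]^{\prec1}$. Then $(\epsilon_i)$ is summable if and only if $(\log(1+\epsilon_i))_{i\in I}$ is summable.
   Context: A monomial group is a (multiplicatively written) totally ordered abelian group $\mathfrak{M}$, with order written $\prec$. A subset of $\mathfrak{M}$ is well-based if it has no infinite strictly increasing sequence. $\mathbb{k}[[\mathfrak{M}]]$ is the Hahn field of formal series $f=\sum_{\mathfrak{m}}f_{\mathfrak{m}}\mathfrak{m}$ ($f_{\mathfrak{m}}\in\mathbb{k}$) with well-based support $\operatorname{supp}f=\{\mathfrak{m}:f_{\mathfrak{m}}\neq0\}$. $\mathbb{k}[[\mathfrak{M}]]^{\prec1}$ is the set of $f$ with $\operatorname{supp} f\subseteq\{\mathfrak{m}:\mathfrak{m}\prec1\}$. A family $(f_i)_{i\in I}$ ($I$ a set) is summable if $\bigcup_i\operatorname{supp}f_i$ is well-based and each $\mathfrak{m}$ lies in $\operatorname{supp}f_i$ for only finitely many $i$; its sum is taken coefficientwise. For $\epsilon\in\mathbb{k}[[\mathfrak{M}]]^{\prec1}$, $\log(1+\epsilon)=\sum_{j\ge1}(-1)^{j-1}\epsilon^j/j$ (this sum exists). *)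

theory Defs
  imports Main
begin

text \<open>Monomial group: a totally ordered abelian group, written additively
  (type class linordered_ab_group_add); the monomial 1 is 0, monomial product is +,
  and m \<prec> 1 reads m < 0.  Series over a field 'k are coefficient functions 'm \<Rightarrow> 'k.\<close>

definition well_based :: "'m::linorder set \<Rightarrow> bool" where
  "well_based S \<longleftrightarrow> \<not> (\<exists>f::nat \<Rightarrow> 'm. (\<forall>n. f n \<in> S) \<and> strict_mono f)"

definition supp :: "('m \<Rightarrow> 'k::zero) \<Rightarrow> 'm set" where
  "supp f = {m. f m \<noteq> 0}"

definition hahn :: "('m::linorder \<Rightarrow> 'k::zero) \<Rightarrow> bool" where
  "hahn f \<longleftrightarrow> well_based (supp f)"

definition infinitesimal :: "('m::linordered_ab_group_add \<Rightarrow> 'k::zero) \<Rightarrow> bool" where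
  "infinitesimal f \<longleftrightarrow> hahn f \<and> supp f \<subseteq> {m. m < 0}"

definition hone :: "'m::linordered_ab_group_add \<Rightarrow> 'k::field" where
  "hone m = (if m = 0 then 1 else 0)"

definition hmult :: "('m::linordered_ab_group_add \<Rightarrow> 'k::field) \<Rightarrow> ('m \<Rightarrow> 'k) \<Rightarrow> 'm \<Rightarrow> 'k" where
  "hmult f g m = (\<Sum>p\<in>{(a, b). a \<in> supp f \<and> b \<in> supp g \<and> a + b = m}. f (fst p) * g (snd p))"

fun hpow :: "('m::linordered_ab_group_add \<Rightarrow> 'k::field) \<Rightarrow> nat \<Rightarrow> 'm \<Rightarrow> 'k" where
  "hpow f 0 = hone"
| "hpow f (Suc n) = hmult f (hpow f n)"

definition hsummable :: "'i set \<Rightarrow> ('i \<Rightarrow> 'm::linorder \<Rightarrow> 'k::zero) \<Rightarrow> bool" where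
  "hsummable I F \<longleftrightarrow> well_based (\<Union>i\<in>I. supp (F i)) \<and> (\<forall>m. finite {i\<in>I. m \<in> supp (F i)})"

definition hsum :: "'i set \<Rightarrow> ('i \<Rightarrow> 'm \<Rightarrow> 'k::comm_monoid_add) \<Rightarrow> 'm \<Rightarrow> 'k" where
  "hsum I F m = (\<Sum>i\<in>{i\<in>I. F i m \<noteq> 0}. F i m)"

definition hlog1p :: "('m::linordered_ab_group_add \<Rightarrow> 'k::field_char_0) \<Rightarrow> 'm \<Rightarrow> 'k" where
  "hlog1p eps = hsum {1..} (\<lambda>j m. (-1) ^ (j - 1) * hpow eps j m / of_nat j)"

end

theory Submission
  imports Defs "HOL-Library.Multiset"
begin

lemma wb_subset: "well_based S \<Longrightarrow> T \<subseteq> S \<Longrightarrow> well_based T"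
  unfolding well_based_def by blast

lemma wb_max:
  fixes S :: "'m::linorder set"
  assumes "well_based S" "S \<noteq> {}"
  shows "\<exists>x\<in>S. \<forall>y\<in>S. y \<le> x"
proof (rule ccontr)
  assume "\<not> ?thesis"
  hence nx: "\<forall>x\<in>S. \<exists>y\<in>S. x < y" by (auto simp: not_le)
  obtain x0 where x0: "x0 \<in> S" using assms(2) by blast
  define nxt where "nxt x = (SOME y. y \<in> S \<and> x < y)" for x
  have nxt: "nxt x \<in> S \<and> x < nxt x" if "x \<in> S" for x
  proof -
    have "\<exists>y. y \<in> S \<and> x < y" using nx that by blast
    thus ?thesis unfolding nxt_def by (rule someI_ex)
  qed
  define f where "f n = (nxt ^^ n) x0" for n
  have fS: "f n \<in> S" for n by (induction n) (auto simp: f_def x0 nxt)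
  have "f n < f (Suc n)" for n using nxt[OF fS[of n]] by (simp add: f_def)
  hence "strict_mono f" by (simp add: strict_mono_Suc_iff)
  thus False using assms(1) fS unfolding well_based_def by blast
qed

lemma wb_noninc_subseq:
  fixes a :: "nat \<Rightarrow> 'm::linorder"
  assumes "well_based U" "\<forall>n. a n \<in> U"
  shows "\<exists>\<phi>::nat\<Rightarrow>nat. strict_mono \<phi> \<and> (\<forall>i j. i < j \<longrightarrow> a (\<phi> j) \<le> a (\<phi> i))"
proof -
  have "\<exists>n\<ge>N. \<forall>k\<ge>N. a k \<le> a n" for N
  proof -
    have "well_based (a ` {N..})" by (rule wb_subset[OF assms(1)]) (use assms(2) in auto)
    moreover have "a ` {N..} \<noteq> {}" by auto
    ultimately obtain x where "x \<in> a ` {N..}" "\<forall>y\<in>a ` {N..}. y \<le> x" using wb_max by blast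
    thus ?thesis by auto
  qed
  hence "\<forall>N. \<exists>n. N \<le> n \<and> (\<forall>k\<ge>N. a k \<le> a n)" by blast
  hence "\<exists>p. \<forall>N. N \<le> p N \<and> (\<forall>k\<ge>N. a k \<le> a (p N))" by (rule choice)
  then obtain p where p0: "\<forall>N. N \<le> p N \<and> (\<forall>k\<ge>N. a k \<le> a (p N))" by blast
  have p: "p N \<ge> N \<and> (\<forall>k\<ge>N. a k \<le> a (p N))" for N using p0 by blast
  define \<phi> where "\<phi> = rec_nat (p 0) (\<lambda>_ x. p (Suc x))"
  have \<phi>0: "\<phi> 0 = p 0" and \<phi>S: "\<phi> (Suc k) = p (Suc (\<phi> k))" for k by (simp_all add: \<phi>_def)
  have sm: "strict_mono \<phi>"
    unfolding strict_mono_Suc_iff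
  proof
    fix n
    have "Suc (\<phi> n) \<le> p (Suc (\<phi> n))" using p by blast
    thus "\<phi> n < \<phi> (Suc n)" by (simp add: \<phi>S)
  qed
  have ex: "\<exists>N\<le>\<phi> i. \<phi> i = p N" for i
  proof (cases i)
    case 0 thus ?thesis using p[of 0] by (auto simp: \<phi>0)
  next
    case (Suc k)
    have e: "\<phi> i = p (Suc (\<phi> k))" using Suc by (simp only: \<phi>S)
    have "Suc (\<phi> k) \<le> p (Suc (\<phi> k))" using p by blast
    thus ?thesis using e by (intro exI[of _ "Suc (\<phi> k)"]) simp
  qed
  have am: "a (\<phi> j) \<le> a (\<phi> i)" if "i < j" for i j
  proof -
    obtain N where N: "N \<le> \<phi> i" "\<phi> i = p N" using ex by blast
    have "\<phi> i < \<phi> j" using sm that by (rule strict_monoD)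
    hence "N \<le> \<phi> j" using N(1) by simp
    hence "a (\<phi> j) \<le> a (p N)" using p[of N] by blast
    thus ?thesis using N(2) by simp
  qed
  show ?thesis
    by (rule exI[of _ \<phi>]) (simp add: sm am)
qed

definition Wm :: "'m set \<Rightarrow> 'm multiset set" where
  "Wm U = {M. M \<noteq> {#} \<and> set_mset M \<subseteq> U}"

definition plusU :: "'m::comm_monoid_add set \<Rightarrow> 'm set" where
  "plusU U = sum_mset ` Wm U"

definition badseq :: "'m::ordered_ab_group_add set \<Rightarrow> (nat \<Rightarrow> 'm multiset) \<Rightarrow> bool" where
  "badseq U f \<longleftrightarrow> (\<forall>n. f n \<in> Wm U) \<and>
     (\<forall>i j. i < j \<longrightarrow> sum_mset (f i) \<le> sum_mset (f j) \<and> f i \<noteq> f j)"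

lemma sum_neg:
  fixes M :: "'m::linordered_ab_group_add multiset"
  assumes "\<forall>x\<in>#M. x < 0"
  shows "sum_mset M \<le> 0 \<and> (M \<noteq> {#} \<longrightarrow> sum_mset M < 0)"
  using assms
proof (induction M)
  case empty thus ?case by simp
next
  case (add x M)
  hence "x < 0" "sum_mset M \<le> 0" by auto
  hence "x + sum_mset M < 0" by (simp add: add_neg_nonpos)
  thus ?case by simp
qed

theorem no_bad:
  fixes U :: "'m::linordered_ab_group_add set"
  assumes wb: "well_based U" and neg: "\<forall>u\<in>U. u < 0"
  shows "\<not> (\<exists>f. badseq U f)"
proof
  assume exb: "\<exists>f. badseq U f"
  define ok where "ok g n x \<longleftrightarrow> (\<exists>f. badseq U f \<and> (\<forall>i<n. f i = g i) \<and> f n = x)" for g n x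
  define pre where "pre = rec_nat (\<lambda>_. {#}) (\<lambda>n g. g(n := ARG_MIN size x. ok g n x))"
  have preS: "pre (Suc n) = (pre n)(n := ARG_MIN size x. ok (pre n) n x)" for n
    by (simp add: pre_def)
  have inv: "\<exists>f. badseq U f \<and> (\<forall>i<n. f i = pre n i)" for n
  proof (induction n)
    case 0 thus ?case using exb by auto
  next
    case (Suc n)
    then obtain f where f: "badseq U f" "\<forall>i<n. f i = pre n i" by blast
    hence "ok (pre n) n (f n)" by (auto simp: ok_def)
    hence "ok (pre n) n (ARG_MIN size x. ok (pre n) n x)" by (rule arg_min_natI)
    then obtain f' where "badseq U f'" "\<forall>i<n. f' i = pre n i"
      "f' n = (ARG_MIN size x. ok (pre n) n x)" by (auto simp: ok_def)
    thus ?case by (auto simp: preS less_Suc_eq)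
  qed
  have stab: "pre n i = pre (Suc i) i" if "i < n" for i n
    using that
  proof (induction n)
    case 0 thus ?case by simp
  next
    case (Suc n) thus ?case by (cases "i = n") (auto simp: preS less_Suc_eq)
  qed
  define h where "h i = pre (Suc i) i" for i
  have min: "size (h n) \<le> size (f n)" if "badseq U f" "\<forall>i<n. f i = h i" for f n
  proof -
    have "\<forall>i<n. f i = pre n i"
    proof (intro allI impI)
      fix i assume "i < n"
      thus "f i = pre n i" using that(2) stab[of i n] unfolding h_def by simp
    qed
    hence "ok (pre n) n (f n)" unfolding ok_def using that(1) by blast
    hence "size (ARG_MIN size x. ok (pre n) n x) \<le> size (f n)" by (rule arg_min_nat_le)
    thus ?thesis by (simp add: h_def preS)
  qed
  have hW: "h n \<in> Wm U" for n
  proof -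
    obtain f where "badseq U f" "\<forall>i<Suc n. f i = pre (Suc n) i" using inv by blast
    hence e: "f n = h n" unfolding h_def by blast
    have "f n \<in> Wm U" using \<open>badseq U f\<close> unfolding badseq_def by blast
    thus ?thesis using e by simp
  qed
  have hpair: "sum_mset (h i) \<le> sum_mset (h j) \<and> h i \<noteq> h j" if "i < j" for i j
  proof -
    obtain f where f: "badseq U f" "\<forall>k<Suc j. f k = pre (Suc j) k" using inv by blast
    have "f i = h i" using f(2) stab[of i "Suc j"] that by (auto simp: h_def)
    moreover have "f j = h j" using f(2) by (auto simp: h_def)
    moreover have "sum_mset (f i) \<le> sum_mset (f j) \<and> f i \<noteq> f j"
      using f(1) that unfolding badseq_def by blast
    ultimately show ?thesis by simp
  qed
  define a where "a n = Max (set_mset (h n))" for n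
  define v where "v n = h n - {#a n#}" for n
  have a_in: "a n \<in># h n" for n
    using hW[of n] unfolding a_def Wm_def by (auto intro: Max_in)
  have aU: "a n \<in> U" for n using a_in[of n] hW[of n] by (auto simp: Wm_def)
  have hv: "h n = add_mset (a n) (v n)" for n using a_in[of n] by (simp add: v_def)
  have sv: "sum_mset (h n) = a n + sum_mset (v n)" for n by (subst hv) simp
  have vU: "set_mset (v n) \<subseteq> U" for n using hW[of n] hv[of n] by (auto simp: Wm_def)
  have vneg: "\<forall>x\<in>#v n. x < 0" for n using vU[of n] neg by auto
  obtain \<phi> :: "nat \<Rightarrow> nat" where sm: "strict_mono \<phi>" and \<phi>: "\<And>i j. i < j \<Longrightarrow> a (\<phi> j) \<le> a (\<phi> i)"
    using wb_noninc_subseq[OF wb, of a] aU by blast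
  have tail: "sum_mset (v (\<phi> i)) \<le> sum_mset (v (\<phi> j)) \<and> v (\<phi> i) \<noteq> v (\<phi> j)" if "i < j" for i j
  proof -
    have lt: "\<phi> i < \<phi> j" using sm that by (rule strict_monoD)
    have 1: "a (\<phi> i) + sum_mset (v (\<phi> i)) \<le> a (\<phi> j) + sum_mset (v (\<phi> j))"
      using hpair[OF lt] by (simp only: sv)
    have 2: "a (\<phi> j) \<le> a (\<phi> i)" using \<phi>[OF that] .
    have "sum_mset (v (\<phi> i)) \<le> sum_mset (v (\<phi> j))"
    proof -
      have "a (\<phi> j) + sum_mset (v (\<phi> i)) \<le> a (\<phi> i) + sum_mset (v (\<phi> i))" using 2 by simp
      also have "\<dots> \<le> a (\<phi> j) + sum_mset (v (\<phi> j))" using 1 .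
      finally show ?thesis by simp
    qed
    moreover have "v (\<phi> i) \<noteq> v (\<phi> j)"
    proof
      assume e: "v (\<phi> i) = v (\<phi> j)"
      hence "a (\<phi> i) \<le> a (\<phi> j)" using 1 by simp
      hence "a (\<phi> i) = a (\<phi> j)" using 2 by simp
      hence "h (\<phi> i) = h (\<phi> j)" using e hv[of "\<phi> i"] hv[of "\<phi> j"] by simp
      thus False using hpair[OF lt] by simp
    qed
    ultimately show ?thesis by blast
  qed
  have vne: "v (\<phi> k) \<noteq> {#}" for k
  proof
    assume e: "v (\<phi> k) = {#}"
    have "0 \<le> sum_mset (v (\<phi> (Suc k)))" using tail[OF lessI[of k]] e by simp
    hence "v (\<phi> (Suc k)) = {#}" using sum_neg[OF vneg[of "\<phi> (Suc k)"]] by auto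
    thus False using tail[OF lessI[of k]] e by simp
  qed
  define g where "g i = (if i < \<phi> 0 then h i else v (\<phi> (i - \<phi> 0)))" for i
  have gW: "g n \<in> Wm U" for n
    using hW vne vU by (auto simp: g_def Wm_def)
  have gpair: "sum_mset (g i) \<le> sum_mset (g j) \<and> g i \<noteq> g j" if "i < j" for i j
  proof (cases "j < \<phi> 0")
    case True thus ?thesis using hpair[OF that] that by (simp add: g_def)
  next
    case jF: False
    show ?thesis
    proof (cases "i < \<phi> 0")
      case True
      define k where "k = j - \<phi> 0"
      have "\<phi> 0 \<le> \<phi> k" by (rule monoD[OF strict_mono_mono[OF sm]]) simp
      hence "i < \<phi> k" using True by simp
      hence "sum_mset (h i) \<le> sum_mset (h (\<phi> k))" using hpair by blast
      also have "\<dots> = a (\<phi> k) + sum_mset (v (\<phi> k))" by (rule sv)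
      also have "\<dots> < sum_mset (v (\<phi> k))" using aU[of "\<phi> k"] neg by (simp add: add_neg_nonpos)
      finally have "sum_mset (h i) < sum_mset (v (\<phi> k))" .
      thus ?thesis using True jF by (auto simp: g_def k_def)
    next
      case False
      have "i - \<phi> 0 < j - \<phi> 0" using False that by simp
      thus ?thesis using tail False jF by (simp add: g_def)
    qed
  qed
  have gbad: "badseq U g" using gW gpair by (simp add: badseq_def)
  have "size (h (\<phi> 0)) \<le> size (g (\<phi> 0))" by (rule min[OF gbad]) (simp add: g_def)
  also have "g (\<phi> 0) = v (\<phi> 0)" by (simp add: g_def)
  finally show False using hv[of "\<phi> 0"] by simp
qed


lemma plus_wb:
  fixes U :: "'m::linordered_ab_group_add set"
  assumes wb: "well_based U" and neg: "\<forall>u\<in>U. u < 0"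
  shows "well_based (plusU U)"
  unfolding well_based_def
proof
  assume "\<exists>x::nat \<Rightarrow> 'm. (\<forall>n. x n \<in> plusU U) \<and> strict_mono x"
  then obtain x :: "nat \<Rightarrow> 'm" where x: "\<forall>n. x n \<in> plusU U" "strict_mono x" by blast
  have "\<forall>n. \<exists>M. M \<in> Wm U \<and> sum_mset M = x n"
  proof
    fix n
    have "x n \<in> sum_mset ` Wm U" using x(1) by (simp add: plusU_def)
    then obtain M where "M \<in> Wm U" "x n = sum_mset M" by (rule imageE)
    thus "\<exists>M. M \<in> Wm U \<and> sum_mset M = x n" by auto
  qed
  hence "\<exists>M. \<forall>n. M n \<in> Wm U \<and> sum_mset (M n) = x n" by (rule choice)
  then obtain M where M: "\<forall>n. M n \<in> Wm U \<and> sum_mset (M n) = x n" by blast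
  have "badseq U M" unfolding badseq_def
  proof (intro conjI)
    show "\<forall>n. M n \<in> Wm U" using M by blast
  next
    show "\<forall>i j. i < j \<longrightarrow> sum_mset (M i) \<le> sum_mset (M j) \<and> M i \<noteq> M j"
    proof (intro allI impI)
    fix i j :: nat assume "i < j"
    hence "x i < x j" using x(2) by (rule strict_monoD[rotated])
    moreover have "sum_mset (M i) = x i" "sum_mset (M j) = x j" using M by blast+
    ultimately have "sum_mset (M i) < sum_mset (M j)" by simp
    thus "sum_mset (M i) \<le> sum_mset (M j) \<and> M i \<noteq> M j" by auto
    qed
  qed
  thus False using no_bad[OF wb neg] by blast
qed

lemma reps_finite:
  fixes U :: "'m::linordered_ab_group_add set"
  assumes wb: "well_based U" and neg: "\<forall>u\<in>U. u < 0"
  shows "finite {M \<in> Wm U. sum_mset M = m}"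
proof (rule ccontr)
  assume "\<not> ?thesis"
  hence "\<exists>f :: nat \<Rightarrow> 'm multiset. inj f \<and> range f \<subseteq> {M \<in> Wm U. sum_mset M = m}"
    by (simp only: infinite_iff_countable_subset)
  then obtain f :: "nat \<Rightarrow> 'm multiset" where f: "inj f" "range f \<subseteq> {M \<in> Wm U. sum_mset M = m}"
    by blast
  have "badseq U f" unfolding badseq_def
  proof (intro conjI)
    show "\<forall>n. f n \<in> Wm U" using f(2) by blast
  next
    show "\<forall>i j. i < j \<longrightarrow> sum_mset (f i) \<le> sum_mset (f j) \<and> f i \<noteq> f j"
    proof (intro allI impI)
    fix i j :: nat assume "i < j"
    hence "i \<noteq> j" by simp
    hence "f i \<noteq> f j" using f(1) by (simp add: inj_eq)
    moreover have "f i \<in> {M \<in> Wm U. sum_mset M = m}" "f j \<in> {M \<in> Wm U. sum_mset M = m}"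
      using f(2) by blast+
    hence "sum_mset (f i) = sum_mset (f j)" by simp
    ultimately show "sum_mset (f i) \<le> sum_mset (f j) \<and> f i \<noteq> f j" by simp
    qed
  qed
  thus False using no_bad[OF wb neg] by blast
qed

lemma plus_mono: "S \<subseteq> T \<Longrightarrow> plusU S \<subseteq> plusU T"
  unfolding plusU_def Wm_def by blast

lemma plus_single: "a \<in> S \<Longrightarrow> a \<in> plusU S"
  unfolding plusU_def Wm_def by (rule image_eqI[of _ _ "{#a#}"]) auto

lemma plus_add: "x \<in> plusU S \<Longrightarrow> y \<in> plusU S \<Longrightarrow> x + y \<in> plusU S"
proof -
  assume "x \<in> plusU S" "y \<in> plusU S"
  then obtain A B where "A \<in> Wm S" "B \<in> Wm S" "x = sum_mset A" "y = sum_mset B"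
    unfolding plusU_def by blast
  thus ?thesis unfolding plusU_def Wm_def by (intro image_eqI[of _ _ "A + B"]) auto
qed

lemma plus_closed: "M \<noteq> {#} \<Longrightarrow> set_mset M \<subseteq> plusU T \<Longrightarrow> sum_mset M \<in> plusU T"
proof (induction M)
  case empty thus ?case by simp
next
  case (add x M)
  show ?case
  proof (cases "M = {#}")
    case True thus ?thesis using add.prems by simp
  next
    case False
    hence "sum_mset M \<in> plusU T" using add by simp
    moreover have "x \<in> plusU T" using add.prems by simp
    ultimately show ?thesis by (simp add: plus_add)
  qed
qed

lemma plus_neg:
  fixes S :: "'m::linordered_ab_group_add set"
  assumes "S \<subseteq> {x. x < 0}" shows "plusU S \<subseteq> {x. x < 0}"
proof
  fix x assume "x \<in> plusU S"
  then obtain M where "M \<in> Wm S" "x = sum_mset M" unfolding plusU_def by blast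
  moreover have "\<forall>y\<in>#M. y < 0" using \<open>M \<in> Wm S\<close> assms unfolding Wm_def by blast
  ultimately show "x \<in> {x. x < 0}" using sum_neg[of M] unfolding Wm_def by auto
qed


lemma hone_supp: "supp (hone :: 'm::linordered_ab_group_add \<Rightarrow> 'k::field) = {0}"
  by (auto simp: supp_def hone_def)

lemma hmult_nz:
  assumes "hmult f g m \<noteq> 0"
  shows "\<exists>a b. a \<in> supp f \<and> b \<in> supp g \<and> a + b = m"
proof (rule ccontr)
  assume "\<not> ?thesis"
  hence "{(a, b). a \<in> supp f \<and> b \<in> supp g \<and> a + b = m} = {}" by auto
  hence "hmult f g m = 0" unfolding hmult_def by (simp only: sum.empty)
  thus False using assms by simp
qed

lemma hpow_nz:
  fixes f :: "'m::linordered_ab_group_add \<Rightarrow> 'k::field"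
  shows "hpow f n m \<noteq> 0 \<Longrightarrow> \<exists>M. size M = n \<and> set_mset M \<subseteq> supp f \<and> sum_mset M = m"
proof (induction n arbitrary: m)
  case 0
  hence "m = 0" by (simp add: hone_def split: if_splits)
  thus ?case by (intro exI[of _ "{#}"]) simp
next
  case (Suc n)
  hence "hmult f (hpow f n) m \<noteq> 0" by simp
  then obtain a b where ab: "a \<in> supp f" "b \<in> supp (hpow f n)" "a + b = m"
    using hmult_nz by blast
  have "hpow f n b \<noteq> 0" using ab(2) by (simp add: supp_def)
  then obtain M where M: "size M = n" "set_mset M \<subseteq> supp f" "sum_mset M = b"
    using Suc.IH by blast
  show ?case using M ab by (intro exI[of _ "add_mset a M"]) simp
qed

lemma hpow1: "hpow (f :: 'm::linordered_ab_group_add \<Rightarrow> 'k::field) 1 m = f m"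
proof -
  have "{(a, b). a \<in> supp f \<and> b \<in> supp (hone :: 'm \<Rightarrow> 'k) \<and> a + b = m}
        = (if m \<in> supp f then {(m, 0)} else {})"
    by (auto simp: hone_supp)
  thus ?thesis by (simp add: hmult_def hone_def supp_def)
qed

definition lterm :: "('m::linordered_ab_group_add \<Rightarrow> 'k::field_char_0) \<Rightarrow> nat \<Rightarrow> 'm \<Rightarrow> 'k" where
  "lterm eps j m = (-1) ^ (j - 1) * hpow eps j m / of_nat j"

lemma hlog1p_eq: "hlog1p eps m = (\<Sum>j\<in>{j\<in>{1..}. lterm eps j m \<noteq> 0}. lterm eps j m)"
  unfolding hlog1p_def hsum_def lterm_def by simp

lemma lterm_nz: "j \<ge> 1 \<Longrightarrow> lterm eps j m \<noteq> 0 \<longleftrightarrow> hpow eps j m \<noteq> 0"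
  unfolding lterm_def by simp

lemma hlog_supp: "supp (hlog1p eps) \<subseteq> plusU (supp eps)"
proof
  fix m assume "m \<in> supp (hlog1p eps)"
  hence "hlog1p eps m \<noteq> 0" by (simp add: supp_def)
  hence "{j\<in>{1..}. lterm eps j m \<noteq> 0} \<noteq> {}" unfolding hlog1p_eq by (metis sum.empty)
  then obtain j where j: "j \<ge> 1" "lterm eps j m \<noteq> 0" by auto
  hence "hpow eps j m \<noteq> 0" using lterm_nz by blast
  then obtain M where M: "size M = j" "set_mset M \<subseteq> supp eps" "sum_mset M = m"
    using hpow_nz by blast
  have "M \<noteq> {#}" using M(1) j(1) by auto
  thus "m \<in> plusU (supp eps)" using M unfolding plusU_def Wm_def by blast
qed


lemma eps_supp:
  fixes eps :: "'m::linordered_ab_group_add \<Rightarrow> 'k::field_char_0"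
  assumes inf: "infinitesimal eps"
  shows "supp eps \<subseteq> plusU (supp (hlog1p eps))"
proof (rule ccontr)
  define S where "S = supp eps"
  define P where "P = plusU (supp (hlog1p eps))"
  have wbS: "well_based S" using inf by (simp add: S_def infinitesimal_def hahn_def)
  have negS: "\<forall>u\<in>S. u < 0" using inf by (auto simp: S_def infinitesimal_def)
  assume "\<not> supp eps \<subseteq> plusU (supp (hlog1p eps))"
  hence "S - P \<noteq> {}" by (auto simp: S_def P_def)
  moreover have "well_based (S - P)" using wbS by (rule wb_subset) auto
  ultimately obtain m where m: "m \<in> S - P" and mmax: "\<forall>y\<in>S - P. y \<le> m"
    using wb_max by blast
  have em: "eps m \<noteq> 0" using m by (simp add: S_def supp_def)
  have Lm: "hlog1p eps m = 0"
  proof (rule ccontr)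
    assume "hlog1p eps m \<noteq> 0"
    hence "m \<in> P" unfolding P_def by (intro plus_single) (simp add: supp_def)
    thus False using m by simp
  qed
  define J where "J = {j\<in>{1..}. lterm eps j m \<noteq> 0}"
  have Jrep: "\<exists>M. size M = j \<and> M \<in> Wm S \<and> sum_mset M = m" if "j \<in> J" for j
  proof -
    have "j \<ge> 1" "lterm eps j m \<noteq> 0" using that by (auto simp: J_def)
    hence "hpow eps j m \<noteq> 0" using lterm_nz by blast
    then obtain M where M: "size M = j" "set_mset M \<subseteq> S" "sum_mset M = m"
      using hpow_nz unfolding S_def by blast
    have "M \<noteq> {#}" using M(1) \<open>j \<ge> 1\<close> by auto
    thus ?thesis using M unfolding Wm_def by blast
  qed
  have "J \<subseteq> size ` {M \<in> Wm S. sum_mset M = m}"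
  proof
    fix j assume "j \<in> J"
    then obtain M where "size M = j" "M \<in> Wm S" "sum_mset M = m" using Jrep by blast
    thus "j \<in> size ` {M \<in> Wm S. sum_mset M = m}" by force
  qed
  hence finJ: "finite J" using reps_finite[OF wbS negS, of m] finite_surj by blast
  have l1: "lterm eps 1 m = eps m" unfolding lterm_def hpow1 by simp
  have oneJ: "1 \<in> J" using l1 em by (simp add: J_def)
  have "hlog1p eps m = lterm eps 1 m + (\<Sum>j\<in>J - {1}. lterm eps j m)"
    unfolding hlog1p_eq J_def[symmetric] using finJ oneJ by (simp add: sum.remove)
  hence "(\<Sum>j\<in>J - {1}. lterm eps j m) \<noteq> 0" using Lm l1 em by auto
  then obtain j where j: "j \<in> J - {1}" "lterm eps j m \<noteq> 0"
    using sum.not_neutral_contains_not_neutral by blast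
  then obtain M where M: "size M = j" "M \<in> Wm S" "sum_mset M = m" using Jrep by blast
  have j2: "j \<ge> 2" using j(1) by (auto simp: J_def)
  have MS: "set_mset M \<subseteq> S" using M(2) by (simp add: Wm_def)
  have "set_mset M \<subseteq> P"
  proof
    fix a assume aM: "a \<in># M"
    define M' where "M' = M - {#a#}"
    have MM: "M = add_mset a M'" using aM by (simp add: M'_def)
    have "size M' \<ge> 1" using M(1) j2 MM by simp
    hence "M' \<noteq> {#}" by auto
    moreover have "\<forall>x\<in>#M'. x < 0" using MS MM negS by auto
    ultimately have "sum_mset M' < 0" using sum_neg by blast
    moreover have "m = a + sum_mset M'" using M(3) MM by simp
    ultimately have "m < a" by simp
    moreover have "a \<in> S" using aM MS by blast
    ultimately show "a \<in> P" using mmax by force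
  qed
  moreover have "M \<noteq> {#}" using M(2) by (simp add: Wm_def)
  ultimately have "sum_mset M \<in> P" unfolding P_def by (rule plus_closed[rotated])
  thus False using m M(3) by simp
qed

lemma transfer:
  fixes F G :: "'i \<Rightarrow> 'm::linordered_ab_group_add \<Rightarrow> 'k::field_char_0"
  assumes sF: "hsummable I F"
    and negF: "\<forall>i\<in>I. supp (F i) \<subseteq> {x. x < 0}"
    and GF: "\<forall>i\<in>I. supp (G i) \<subseteq> plusU (supp (F i))"
  shows "hsummable I G"
proof -
  define U where "U = (\<Union>i\<in>I. supp (F i))"
  have wbU: "well_based U" using sF by (simp add: hsummable_def U_def)
  have negU: "\<forall>u\<in>U. u < 0" using negF by (auto simp: U_def)
  have sub: "supp (G i) \<subseteq> plusU U" if "i \<in> I" for i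
  proof -
    have "supp (F i) \<subseteq> U" using that by (auto simp: U_def)
    thus ?thesis using GF that plus_mono by blast
  qed
  have wbG: "well_based (\<Union>i\<in>I. supp (G i))"
    by (rule wb_subset[OF plus_wb[OF wbU negU]]) (use sub in blast)
  have finG: "finite {i\<in>I. m \<in> supp (G i)}" for m
  proof -
    define R where "R = {M \<in> Wm U. sum_mset M = m}"
    define A where "A = (\<Union>M\<in>R. set_mset M)"
    have finA: "finite A" unfolding A_def R_def using reps_finite[OF wbU negU, of m] by auto
    have "{i\<in>I. m \<in> supp (G i)} \<subseteq> (\<Union>a\<in>A. {i\<in>I. a \<in> supp (F i)})"
    proof
      fix i assume i: "i \<in> {i\<in>I. m \<in> supp (G i)}"
      hence "m \<in> plusU (supp (F i))" using GF by blast
      then obtain M where M: "M \<in> Wm (supp (F i))" "sum_mset M = m" unfolding plusU_def by blast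
      have "M \<in> R" using M i unfolding R_def Wm_def U_def by blast
      moreover obtain a where "a \<in># M" using M(1) unfolding Wm_def by blast
      ultimately show "i \<in> (\<Union>a\<in>A. {i\<in>I. a \<in> supp (F i)})"
        using M(1) i unfolding A_def Wm_def by blast
    qed
    moreover have "finite (\<Union>a\<in>A. {i\<in>I. a \<in> supp (F i)})"
      using finA sF by (simp add: hsummable_def)
    ultimately show ?thesis by (rule finite_subset)
  qed
  show ?thesis using wbG finG by (simp add: hsummable_def)
qed

theorem corollary2p6:
  fixes I :: "'i set"
    and eps :: "'i \<Rightarrow> 'm::linordered_ab_group_add \<Rightarrow> 'k::field_char_0"
  assumes "\<forall>i\<in>I. infinitesimal (eps i)"
  shows "hsummable I eps \<longleftrightarrow> hsummable I (\<lambda>i. hlog1p (eps i))"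
proof
  have negE: "\<forall>i\<in>I. supp (eps i) \<subseteq> {x. x < 0}"
    using assms by (auto simp: infinitesimal_def)
  {
    assume "hsummable I eps"
    thus "hsummable I (\<lambda>i. hlog1p (eps i))"
      by (rule transfer) (use negE hlog_supp in auto)
  }
  {
    assume "hsummable I (\<lambda>i. hlog1p (eps i))"
    moreover have "\<forall>i\<in>I. supp (hlog1p (eps i)) \<subseteq> {x. x < 0}"
    proof
      fix i assume "i \<in> I"
      hence "plusU (supp (eps i)) \<subseteq> {x. x < 0}" using negE plus_neg by blast
      thus "supp (hlog1p (eps i)) \<subseteq> {x. x < 0}" using hlog_supp by blast
    qed
    moreover have "\<forall>i\<in>I. supp (eps i) \<subseteq> plusU (supp (hlog1p (eps i)))"
      using assms eps_supp by blast
    ultimately show "hsummable I eps" by (rule transfer)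
  }
qed

end
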